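(* For every $Y\in\mathcal A_X$ and every $\mathbf U\in\mathcal E([0,T];\mathcal A_X^{\otimes 2})$, $$\varphi\big(Y\,\delta^X(\mathbf U)^*\big)=(\varphi\times\varphi)\big(\langle D^XY;\mathbf U^*\rangle_{\mathcal H}\big).$$
   Context: NC probability space: a pair $(\mathcal A,\varphi)$ with $\mathcal A$ a unital complex Banach $*$-algebra with $\|XY\|\le\|X\|\|Y\|$, $\|X^*X\|=\|X\|^2$, and $\varphi$ a linear functional with $\varphi(1)=1$, $\varphi(XY)=\varphi(YX)$, $\varphi(X^*X)\ge0$, $\varphi(X^*X)=0\Rightarrow X=0$. For $k\ge2$, $\mathcal A^{\otimes k}$ is the algebraic tensor product with componentwise product $(F_1\otimes\cdots\otimes F_k)\cdot(G_1\otimes\cdots\otimes G_k)=(F_1G_1)\otimes\cdots\otimes(F_kG_k)$, involution $(F_1\otimes\cdots\otimes F_k)^*=F_1^*\otimes\cdots\otimes F_k^*$, and $\varphi^{\times k}(F_1\otimes\cdots\otimes F_k)=\varphi(F_1)\cdots\varphi(F_k)$ (written $\varphi\times\varphi$, $\varphi\times\varphi\times\varphi$), all extended linearly. Also $(F_1\otimes F_2)\sharp G:=F_1GF_2$ and $(\mathrm{Id}\times\varphi\times\mathrm{Id})(F_1\otimes F_2\otimes F_3):=\varphi(F_2)F_1F_3$, extended linearly. A centered semicircular process $\{X_t\}_{t\in[0,T]}$ is a family of self-adjoint elements whose mixed moments satisfy the free Wick formula $\varphi(X_{t_1}\cdots X_{t_r})=\sum_{\pi\in NC_2(r)}\prod_{\{p,q\}\in\pi}\varphi(X_{t_p}X_{t_q})$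 for even $r$ ($NC_2(r)$ = non-crossing pairings of $\{1,\dots,r\}$) and vanishing odd moments. Fix $T>0$ and a centered semicircular process $\{X_t\}_{t\in[0,T]}$ in $(\mathcal A,\varphi)$; $\mathcal A_X$ is the unital subalgebra generated by $\{X_t\}$. $\mathcal E([0,T];\mathbb R)$ is the space of step functions $h=\sum_i\alpha_i\mathbf 1_{[a_i,b_i)}$ ($\alpha_i\in\mathbb R$, $0\le a_i<b_i\le T$), and $X(h):=\sum_i\alpha_i(X_{b_i}-X_{a_i})$. $\mathcal H$ is the completion of $\mathcal E([0,T];\mathbb R)$ for the inner product determined by $\langle\mathbf 1_{[0,s]},\mathbf 1_{[0,t]}\rangle_{\mathcal H}=\varphi(X_sX_t)$. For an algebra $E$, $\mathcal E([0,T];E)$ is the set of finite sums $t\mapsto\sum_i x_ih_i(t)$ with $x_i\in E$, $h_i\in\mathcal E([0,T];\mathbb R)$. Pairings: $\langle xh,k\rangle_{\mathcal H}=\langle h,xk\rangle_{\mathcal H}:=x\langle h,k\rangle_{\mathcal H}$ and $\langle xh;yk\rangle_{\mathcal H}:=(x\cdot y)\langle h,k\rangle_{\mathcal H}$, extended bilinearly; for $\mathbf U=\sum_ix_ih_i$, $\mathbf U^*:=\sum_ix_i^*h_i$. The derivative $D^X:\mathcal A_X\to\mathcal E([0,T];\mathcal A_X^{\otimes2})$ is the linear map with $D^X1=0$ and $D^X\big(X(h_1)\cdots X(h_m)\big)=\sum_{i=1}^m\big[(X(h_1)\cdots X(h_{i-1}))\otimes(X(h_{i+1})\cdots X(h_m))\big]h_i$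 (empty products $=1$). For $F_1,F_2\in\mathcal A_X$, $D^X_1(F_1\otimes F_2):=D^XF_1\otimes F_2$, $D^X_2(F_1\otimes F_2):=F_1\otimes D^XF_2$ (in $\mathcal E([0,T];\mathcal A_X^{\otimes3})$), extended linearly, and $D^X:=D^X_1+D^X_2$ on $\mathcal A_X^{\otimes2}$. The divergence is defined for $\mathbf F\in\mathcal A_X^{\otimes2}$, $h\in\mathcal E([0,T];\mathbb R)$ by $\delta^X(\mathbf Fh):=\mathbf F\sharp X(h)-(\mathrm{Id}\times\varphi\times\mathrm{Id})\big(\langle D^X\mathbf F,h\rangle_{\mathcal H}\big)$ and extended linearly to $\mathcal E([0,T];\mathcal A_X^{\otimes2})$. *)

theory Defs
  imports "HOL-Analysis.Analysis"
begin

text \<open>The complex structure is given by an explicit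
complex scalar multiplication sc, the involution by st, and the state by phi.\<close>

definition nc_prob_space ::
  "(complex \<Rightarrow> 'a::{real_normed_algebra_1,banach} \<Rightarrow> 'a) \<Rightarrow> ('a \<Rightarrow> 'a) \<Rightarrow> ('a \<Rightarrow> complex) \<Rightarrow> bool"
where
  "nc_prob_space sc st phi \<longleftrightarrow>
     \<comment> \<open>complex Banach algebra structure\<close>
     (\<forall>r x. sc (complex_of_real r) x = scaleR r x) \<and>
     (\<forall>c d x. sc (c + d) x = sc c x + sc d x) \<and>
     (\<forall>c x y. sc c (x + y) = sc c x + sc c y) \<and>
     (\<forall>c d x. sc (c * d) x = sc c (sc d x)) \<and>
     (\<forall>c x y. sc c (x * y) = sc c x * y) \<and>
     (\<forall>c x y. sc c (x * y) = x * sc c y) \<and>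
     (\<forall>c x. norm (sc c x) = cmod c * norm x) \<and>
     \<comment> \<open>involution, C*-identity\<close>
     (\<forall>x y. st (x + y) = st x + st y) \<and>
     (\<forall>c x. st (sc c x) = sc (cnj c) (st x)) \<and>
     (\<forall>x y. st (x * y) = st y * st x) \<and>
     (\<forall>x. st (st x) = x) \<and>
     (\<forall>x. norm (st x * x) = (norm x)\<^sup>2) \<and>
     \<comment> \<open>faithful tracial state\<close>
     (\<forall>x y. phi (x + y) = phi x + phi y) \<and>
     (\<forall>c x. phi (sc c x) = c * phi x) \<and>
     phi 1 = 1 \<and>
     (\<forall>x y. phi (x * y) = phi (y * x)) \<and>
     (\<forall>x. Im (phi (st x * x)) = 0 \<and> Re (phi (st x * x)) \<ge> 0) \<and>
     (\<forall>x. phi (st x * x) = 0 \<longrightarrow> x = 0)"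

definition nc_pairing :: "nat \<Rightarrow> nat set set \<Rightarrow> bool" where
  "nc_pairing r \<pi> \<longleftrightarrow>
     (\<forall>B\<in>\<pi>. card B = 2) \<and> \<Union>\<pi> = {..<r} \<and>
     (\<forall>B\<in>\<pi>. \<forall>C\<in>\<pi>. B \<noteq> C \<longrightarrow> B \<inter> C = {}) \<and>
     (\<forall>B\<in>\<pi>. \<forall>C\<in>\<pi>. \<not> (Min B < Min C \<and> Min C < Max B \<and> Max B < Max C))"

definition NC2 :: "nat \<Rightarrow> nat set set set" where
  "NC2 r = {\<pi>. nc_pairing r \<pi>}"

definition semicircular_process ::
  "('a::{real_normed_algebra_1,banach} \<Rightarrow> 'a) \<Rightarrow> ('a \<Rightarrow> complex) \<Rightarrow> real \<Rightarrow> (real \<Rightarrow> 'a) \<Rightarrow> bool"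
where
  "semicircular_process st phi T X \<longleftrightarrow>
     (\<forall>t\<in>{0..T}. st (X t) = X t) \<and>
     (\<forall>ts. set ts \<subseteq> {0..T} \<longrightarrow>
        phi (prod_list (map X ts)) =
          (if even (length ts)
           then (\<Sum>\<pi>\<in>NC2 (length ts). \<Prod>B\<in>\<pi>. phi (X (ts ! Min B) * X (ts ! Max B)))
           else 0))"

text \<open>A step function is represented by a list of triples (alpha, a, b), standing for
sum alpha * indicator [a,b).\<close>

type_synonym stepfn = "(real \<times> real \<times> real) list"

definition step_in :: "real \<Rightarrow> stepfn \<Rightarrow> bool" where
  "step_in T h \<longleftrightarrow> (\<forall>(\<alpha>, a, b)\<in>set h. 0 \<le> a \<and> a < b \<and> b \<le> T)"

definition Xh :: "(real \<Rightarrow> 'a::real_vector) \<Rightarrow> stepfn \<Rightarrow> 'a" where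
  "Xh X h = (\<Sum>(\<alpha>, a, b)\<leftarrow>h. scaleR \<alpha> (X b - X a))"

text \<open>Inner product of H on step functions: bilinear extension of
<1_[0,s], 1_[0,t]> = phi (X s * X t), i.e. <h,k> = phi (X(h) X(k)).\<close>

definition ipH :: "('a::real_algebra \<Rightarrow> complex) \<Rightarrow> (real \<Rightarrow> 'a) \<Rightarrow> stepfn \<Rightarrow> stepfn \<Rightarrow> complex" where
  "ipH phi X h k = phi (Xh X h * Xh X k)"

text \<open>An element of A_X, given as a (complex) linear combination of monomials
X(h_1)...X(h_m).\<close>

type_synonym polyX = "(complex \<times> stepfn list) list"

definition polyX_in :: "real \<Rightarrow> polyX \<Rightarrow> bool" where
  "polyX_in T P \<longleftrightarrow> (\<forall>(c, hs)\<in>set P. \<forall>h\<in>set hs. step_in T h)"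

definition evalX :: "(complex \<Rightarrow> 'a \<Rightarrow> 'a) \<Rightarrow> (real \<Rightarrow> 'a::{real_algebra_1}) \<Rightarrow> polyX \<Rightarrow> 'a" where
  "evalX sc X P = (\<Sum>(c, hs)\<leftarrow>P. sc c (prod_list (map (Xh X) hs)))"

text \<open>Algebraic tensors represented as finite formal sums of simple tensors.\<close>

type_synonym 'a tens2 = "('a \<times> 'a) list"
type_synonym 'a tens3 = "('a \<times> 'a \<times> 'a) list"
type_synonym 'a E2 = "('a tens2 \<times> stepfn) list"
type_synonym 'a E3 = "('a tens3 \<times> stepfn) list"

definition tens2_mult :: "'a::times tens2 \<Rightarrow> 'a tens2 \<Rightarrow> 'a tens2" where
  "tens2_mult x y = [(a * c, b * d). (a, b) \<leftarrow> x, (c, d) \<leftarrow> y]"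

definition tens2_star :: "('a \<Rightarrow> 'a) \<Rightarrow> 'a tens2 \<Rightarrow> 'a tens2" where
  "tens2_star st x = map (\<lambda>(a, b). (st a, st b)) x"

definition tens2_scale :: "(complex \<Rightarrow> 'a \<Rightarrow> 'a) \<Rightarrow> complex \<Rightarrow> 'a tens2 \<Rightarrow> 'a tens2" where
  "tens2_scale sc c x = map (\<lambda>(a, b). (sc c a, b)) x"

definition tens3_scale :: "(complex \<Rightarrow> 'a \<Rightarrow> 'a) \<Rightarrow> complex \<Rightarrow> 'a tens3 \<Rightarrow> 'a tens3" where
  "tens3_scale sc c x = map (\<lambda>(a, b, d). (sc c a, b, d)) x"

definition phi2 :: "('a \<Rightarrow> complex) \<Rightarrow> 'a tens2 \<Rightarrow> complex" where
  "phi2 phi x = (\<Sum>(a, b)\<leftarrow>x. phi a * phi b)"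

definition sharp :: "'a::{monoid_add,times} tens2 \<Rightarrow> 'a \<Rightarrow> 'a" where
  "sharp x G = (\<Sum>(a, b)\<leftarrow>x. a * G * b)"

definition IdphiId :: "(complex \<Rightarrow> 'a \<Rightarrow> 'a) \<Rightarrow> ('a \<Rightarrow> complex) \<Rightarrow> 'a::{monoid_add,times} tens3 \<Rightarrow> 'a" where
  "IdphiId sc phi z = (\<Sum>(a, b, d)\<leftarrow>z. sc (phi b) (a * d))"

definition pairH3 :: "(complex \<Rightarrow> 'a \<Rightarrow> 'a) \<Rightarrow> ('a::real_algebra \<Rightarrow> complex) \<Rightarrow> (real \<Rightarrow> 'a)
    \<Rightarrow> 'a E3 \<Rightarrow> stepfn \<Rightarrow> 'a tens3" where
  "pairH3 sc phi X U k = concat (map (\<lambda>(x, h). tens3_scale sc (ipH phi X h k) x) U)"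

definition pairH_semi :: "(complex \<Rightarrow> 'a \<Rightarrow> 'a) \<Rightarrow> ('a::real_algebra \<Rightarrow> complex) \<Rightarrow> (real \<Rightarrow> 'a)
    \<Rightarrow> 'a E2 \<Rightarrow> 'a E2 \<Rightarrow> 'a tens2" where
  "pairH_semi sc phi X U V =
     concat [tens2_scale sc (ipH phi X h k) (tens2_mult x y). (x, h) \<leftarrow> U, (y, k) \<leftarrow> V]"

definition E2_star :: "('a \<Rightarrow> 'a) \<Rightarrow> 'a E2 \<Rightarrow> 'a E2" where
  "E2_star st U = map (\<lambda>(x, h). (tens2_star st x, h)) U"

definition DX :: "(complex \<Rightarrow> 'a \<Rightarrow> 'a) \<Rightarrow> (real \<Rightarrow> 'a::real_algebra_1) \<Rightarrow> polyX \<Rightarrow> 'a E2" where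
  "DX sc X P = concat (map (\<lambda>(c, hs).
       map (\<lambda>i. ([(sc c (prod_list (map (Xh X) (take i hs))),
                   prod_list (map (Xh X) (drop (Suc i) hs)))], hs ! i))
           [0..<length hs]) P)"

text \<open>An element of E([0,T]; A_X tensor A_X): a finite sum of (F1 tensor F2) h with
F1, F2 in A_X (given as polynomials in the X(h)) and h a step function.\<close>

type_synonym EX2 = "(polyX \<times> polyX \<times> stepfn) list"

definition EX2_in :: "real \<Rightarrow> EX2 \<Rightarrow> bool" where
  "EX2_in T U \<longleftrightarrow> (\<forall>(P1, P2, h)\<in>set U. polyX_in T P1 \<and> polyX_in T P2 \<and> step_in T h)"

definition EX2_val :: "(complex \<Rightarrow> 'a \<Rightarrow> 'a) \<Rightarrow> (real \<Rightarrow> 'a::real_algebra_1) \<Rightarrow> EX2 \<Rightarrow> 'a E2" where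
  "EX2_val sc X U = map (\<lambda>(P1, P2, h). ([(evalX sc X P1, evalX sc X P2)], h)) U"

text \<open>D^X = D_1 + D_2 on F1 tensor F2\<close>
definition DX2 :: "(complex \<Rightarrow> 'a \<Rightarrow> 'a) \<Rightarrow> (real \<Rightarrow> 'a::real_algebra_1) \<Rightarrow> polyX \<Rightarrow> polyX \<Rightarrow> 'a E3" where
  "DX2 sc X P1 P2 =
     map (\<lambda>(x, h). (map (\<lambda>(a, b). (a, b, evalX sc X P2)) x, h)) (DX sc X P1) @
     map (\<lambda>(x, h). (map (\<lambda>(a, b). (evalX sc X P1, a, b)) x, h)) (DX sc X P2)"

definition deltaX :: "(complex \<Rightarrow> 'a \<Rightarrow> 'a) \<Rightarrow> ('a \<Rightarrow> complex) \<Rightarrow> (real \<Rightarrow> 'a::real_algebra_1)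
    \<Rightarrow> EX2 \<Rightarrow> 'a" where
  "deltaX sc phi X U = (\<Sum>(P1, P2, h)\<leftarrow>U.
      sharp [(evalX sc X P1, evalX sc X P2)] (Xh X h)
      - IdphiId sc phi (pairH3 sc phi X (DX2 sc X P1 P2) h))"

end

theory Submission
  imports Defs
begin


lemma card2_E: assumes "card (B::nat set) = 2" obtains a b where "a < b" "B = {a,b}"
proof -
  from assms obtain x y where "B = {x,y}" "x \<noteq> y" by (auto simp: card_2_iff)
  then show ?thesis using that[of x y] that[of y x] by (cases "x < y") (auto simp: insert_commute)
qed

lemma MinMax2[simp]: "(a::nat) < b \<Longrightarrow> Min {a,b} = a \<and> Max {a,b} = b"
  by auto

lemma NC2_D:
  assumes "\<pi> \<in> NC2 r"
  shows "\<And>B. B \<in> \<pi> \<Longrightarrow> card B = 2" "\<Union>\<pi> = {..<r}"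
    "\<And>B C. B \<in> \<pi> \<Longrightarrow> C \<in> \<pi> \<Longrightarrow> B \<noteq> C \<Longrightarrow> B \<inter> C = {}"
    "\<And>B C. B \<in> \<pi> \<Longrightarrow> C \<in> \<pi> \<Longrightarrow> \<not> (Min B < Min C \<and> Min C < Max B \<and> Max B < Max C)"
  using assms by (auto simp: NC2_def nc_pairing_def)

lemma NC2_sub: "\<pi> \<in> NC2 r \<Longrightarrow> \<pi> \<subseteq> Pow {..<r}"
  using NC2_D(2) by blast

lemma NC2_finite_pi: "\<pi> \<in> NC2 r \<Longrightarrow> finite \<pi>"
  by (meson NC2_sub finite_Pow_iff finite_lessThan finite_subset)

lemma NC2_finite: "finite (NC2 r)"
proof -
  have "NC2 r \<subseteq> Pow (Pow {..<r})" using NC2_sub by blast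
  then show ?thesis by (simp add: finite_subset)
qed

lemma NC2_even: assumes "\<pi> \<in> NC2 r" shows "even r"
proof -
  have fin: "finite \<pi>" using NC2_finite_pi[OF assms] .
  have fb: "\<forall>B\<in>\<pi>. finite B" using NC2_D(1)[OF assms] card.infinite by fastforce
  have "card (\<Union>\<pi>) = (\<Sum>B\<in>\<pi>. card B)"
    by (rule card_Union_disjoint) (use fin fb NC2_D(3)[OF assms] in \<open>auto simp: pairwise_def disjnt_def\<close>)
  also have "\<dots> = 2 * card \<pi>" using NC2_D(1)[OF assms] by simp
  finally show ?thesis using NC2_D(2)[OF assms] by simp
qed

definition shS :: "nat \<Rightarrow> nat set \<Rightarrow> nat set" where "shS k B = (+) k ` B"
definition ushS :: "nat \<Rightarrow> nat set \<Rightarrow> nat set" where "ushS k B = (\<lambda>x. x - k) ` B"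
definition comb :: "nat \<Rightarrow> nat set set \<Rightarrow> nat set set \<Rightarrow> nat set set" where
  "comb j \<sigma> \<tau> = insert {0, Suc j} (shS 1 ` \<sigma> \<union> shS (j+2) ` \<tau>)"

lemma shS_pair[simp]: "shS k {a,b} = {k+a,k+b}" by (simp add: shS_def)
lemma ushS_pair[simp]: "ushS k {a,b} = {a-k,b-k}" by (simp add: ushS_def)
lemma ushS_shS[simp]: "ushS k (shS k B) = B" by (auto simp: shS_def ushS_def image_iff)
lemma shS_ushS: "\<forall>x\<in>B. k \<le> x \<Longrightarrow> shS k (ushS k B) = B"
  by (auto simp: shS_def ushS_def image_iff)
lemma inj_shS: "inj (shS k)" by (metis injI ushS_shS)

lemma Union_shS: "\<Union>(shS k ` \<sigma>) = (+) k ` \<Union>\<sigma>" by (auto simp: shS_def)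
lemma img_add_lessThan: "(+) (k::nat) ` {..<m} = {k..<k+m}"
proof safe
  fix x assume "x \<in> {k..<k+m}" then show "x \<in> (+) k ` {..<m}" by (intro image_eqI[of _ _ "x-k"]) auto
qed auto

lemma NC2_blk: assumes "\<pi> \<in> NC2 r" "B \<in> \<pi>" obtains a b where "a < b" "b < r" "B = {a,b}"
proof -
  obtain a b where "a<b" "B={a,b}" using card2_E NC2_D(1)[OF assms] by metis
  moreover have "b < r" using NC2_D(2)[OF assms(1)] assms(2) \<open>B={a,b}\<close> by auto
  ultimately show ?thesis using that by blast
qed

lemma comb_cases:
  assumes "B \<in> comb j \<sigma> \<tau>" "\<sigma> \<in> NC2 j" "\<tau> \<in> NC2 m"
  obtains "B = {0, Suc j}"
   | a b where "a<b" "b<j" "{a,b}\<in>\<sigma>" "B = {1+a,1+b}"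
   | a b where "a<b" "b<m" "{a,b}\<in>\<tau>" "B = {j+2+a,j+2+b}"
proof -
  consider "B = {0, Suc j}" | "B \<in> shS 1 ` \<sigma>" | "B \<in> shS (j+2) ` \<tau>" using assms(1) by (auto simp: comb_def)
  then show ?thesis
  proof cases
    case 1 then show ?thesis using that(1) by blast
  next
    case 2 then obtain B' where "B' \<in> \<sigma>" "B = shS 1 B'" by auto
    then show ?thesis using NC2_blk[OF assms(2) \<open>B' \<in> \<sigma>\<close>] that(2) by (metis shS_pair)
  next
    case 3 then obtain B' where "B' \<in> \<tau>" "B = shS (j+2) B'" by auto
    then show ?thesis using NC2_blk[OF assms(3) \<open>B' \<in> \<tau>\<close>] that(3) by (metis shS_pair)
  qed
qed

lemma comb_NC2:
  assumes "j < n" "\<sigma> \<in> NC2 j" "\<tau> \<in> NC2 (n-1-j)"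
  shows "comb j \<sigma> \<tau> \<in> NC2 (Suc n)"
proof -
  let ?m = "n-1-j"
  note cc = comb_cases[OF _ assms(2) assms(3)]
  have card: "\<forall>B\<in>comb j \<sigma> \<tau>. card B = 2"
    by (metis card_2_iff cc less_not_refl nat_neq_iff Zero_not_Suc add_left_cancel)
  have "\<Union>(comb j \<sigma> \<tau>) = {0, Suc j} \<union> (+) 1 ` \<Union>\<sigma> \<union> (+) (j+2) ` \<Union>\<tau>"
    by (simp add: comb_def Union_shS Un_assoc)
  also have "\<dots> = {..<Suc n}"
  proof -
    have e1: "(+) 1 ` \<Union>\<sigma> = {1..<1+j}" by (metis img_add_lessThan NC2_D(2)[OF assms(2)])
    have e2: "(+) (j+2) ` \<Union>\<tau> = {j+2..<j+2+(n-1-j)}" by (metis img_add_lessThan NC2_D(2)[OF assms(3)])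
    show ?thesis unfolding e1 e2 using assms(1) by auto
  qed
  finally have un: "\<Union>(comb j \<sigma> \<tau>) = {..<Suc n}" .
  have disj: "\<forall>B\<in>comb j \<sigma> \<tau>. \<forall>C\<in>comb j \<sigma> \<tau>. B \<noteq> C \<longrightarrow> B \<inter> C = {}"
  proof (intro ballI impI)
    fix B C assume B: "B \<in> comb j \<sigma> \<tau>" and C: "C \<in> comb j \<sigma> \<tau>" and ne: "B \<noteq> C"
    show "B \<inter> C = {}"
    proof (rule cc[OF B]; rule cc[OF C])
      fix a b c d assume h: "{a,b} \<in> \<sigma>" "{c,d} \<in> \<sigma>" "B = {1+a,1+b}" "C = {1+c,1+d}"
      then have "{a,b} \<noteq> {c,d}" using ne by auto
      then have "{a,b} \<inter> {c,d} = {}" using NC2_D(3)[OF assms(2) h(1,2)] by blast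
      then show ?thesis using h(3,4) by (auto simp: disjoint_iff)
    next
      fix a b c d assume h: "{a,b} \<in> \<tau>" "{c,d} \<in> \<tau>" "B = {j+2+a,j+2+b}" "C = {j+2+c,j+2+d}"
      then have "{a,b} \<noteq> {c,d}" using ne by auto
      then have "{a,b} \<inter> {c,d} = {}" using NC2_D(3)[OF assms(3) h(1,2)] by blast
      then show ?thesis using h(3,4) by (auto simp: disjoint_iff)
    qed (use ne in auto)
  qed
  have nc: "\<forall>B\<in>comb j \<sigma> \<tau>. \<forall>C\<in>comb j \<sigma> \<tau>. \<not> (Min B < Min C \<and> Min C < Max B \<and> Max B < Max C)"
  proof (intro ballI)
    fix B C assume B: "B \<in> comb j \<sigma> \<tau>" and C: "C \<in> comb j \<sigma> \<tau>"
    show "\<not> (Min B < Min C \<and> Min C < Max B \<and> Max B < Max C)"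
    proof (rule cc[OF B]; rule cc[OF C])
      fix a b c d assume "a<b" "c<d" "{a,b} \<in> \<sigma>" "{c,d} \<in> \<sigma>" "B = {1+a,1+b}" "C = {1+c,1+d}"
      then show ?thesis using NC2_D(4)[OF assms(2), of "{a,b}" "{c,d}"] by auto
    next
      fix a b c d assume "a<b" "c<d" "{a,b} \<in> \<tau>" "{c,d} \<in> \<tau>" "B = {j+2+a,j+2+b}" "C = {j+2+c,j+2+d}"
      then show ?thesis using NC2_D(4)[OF assms(3), of "{a,b}" "{c,d}"] by auto
    qed auto
  qed
  show ?thesis using card un disj nc by (simp add: NC2_def nc_pairing_def)
qed


lemma unshift_NC2:
  assumes c: "\<forall>B\<in>\<rho>. card B = 2" and u: "\<Union>\<rho> = {k..<k+m}"
    and d: "\<forall>B\<in>\<rho>. \<forall>C\<in>\<rho>. B \<noteq> C \<longrightarrow> B \<inter> C = {}"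
    and n: "\<forall>B\<in>\<rho>. \<forall>C\<in>\<rho>. \<not> (Min B < Min C \<and> Min C < Max B \<and> Max B < Max C)"
  shows "ushS k ` \<rho> \<in> NC2 m"
proof -
  have ge: "\<And>B x. B \<in> \<rho> \<Longrightarrow> x \<in> B \<Longrightarrow> k \<le> x" using u by auto
  have blk: "\<And>B. B \<in> \<rho> \<Longrightarrow> \<exists>a b. a < b \<and> k \<le> a \<and> B = {a,b}"
    using c ge by (metis card2_E insertI1)
  have c': "\<forall>B\<in>ushS k ` \<rho>. card B = 2"
  proof
    fix B' assume "B' \<in> ushS k ` \<rho>"
    then obtain B where "B \<in> \<rho>" "B' = ushS k B" by auto
    then obtain a b where "a<b" "k \<le> a" "B = {a,b}" using blk by blast
    then show "card B' = 2" using \<open>B' = ushS k B\<close> by auto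
  qed
  have "\<Union>(ushS k ` \<rho>) = (\<lambda>x. x - k) ` {k..<k+m}" unfolding u[symmetric] by (auto simp: ushS_def)
  also have "\<dots> = {..<m}"
  proof safe
    fix x assume "x < m" then show "x \<in> (\<lambda>x. x - k) ` {k..<k+m}" by (intro image_eqI[of _ _ "x+k"]) auto
  qed auto
  finally have u': "\<Union>(ushS k ` \<rho>) = {..<m}" .
  have d': "\<forall>B\<in>ushS k ` \<rho>. \<forall>C\<in>ushS k ` \<rho>. B \<noteq> C \<longrightarrow> B \<inter> C = {}"
  proof (intro ballI impI)
    fix B' C' assume "B' \<in> ushS k ` \<rho>" "C' \<in> ushS k ` \<rho>" "B' \<noteq> C'"
    then obtain B C where BC: "B \<in> \<rho>" "C \<in> \<rho>" "B' = ushS k B" "C' = ushS k C" by auto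
    then have "B \<noteq> C" using \<open>B' \<noteq> C'\<close> by auto
    then have "B \<inter> C = {}" using d BC by blast
    then show "B' \<inter> C' = {}" using BC ge unfolding ushS_def
      by (auto simp: disjoint_iff) (metis le_add_diff_inverse)
  qed
  have n': "\<forall>B\<in>ushS k ` \<rho>. \<forall>C\<in>ushS k ` \<rho>. \<not> (Min B < Min C \<and> Min C < Max B \<and> Max B < Max C)"
  proof (intro ballI)
    fix B' C' assume "B' \<in> ushS k ` \<rho>" "C' \<in> ushS k ` \<rho>"
    then obtain B C where BC: "B \<in> \<rho>" "C \<in> \<rho>" "B' = ushS k B" "C' = ushS k C" by auto
    obtain a b where ab: "a<b" "k \<le> a" "B = {a,b}" using blk BC by blast
    obtain e f where ef: "e<f" "k \<le> e" "C = {e,f}" using blk BC by blast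
    have "\<not> (a < e \<and> e < b \<and> b < f)" using n BC ab ef by force
    then show "\<not> (Min B' < Min C' \<and> Min C' < Max B' \<and> Max B' < Max C')"
      using BC ab ef by auto
  qed
  show ?thesis using c' u' d' n' by (simp add: NC2_def nc_pairing_def)
qed

lemma q_unique: assumes "\<pi> \<in> NC2 r" "{0,q} \<in> \<pi>" "{0,q'} \<in> \<pi>" shows "q = q'"
proof -
  have "q \<noteq> 0" using NC2_D(1)[OF assms(1) assms(2)] by (cases "q=0") auto
  have "q' \<noteq> 0" using NC2_D(1)[OF assms(1) assms(3)] by (cases "q'=0") auto
  show ?thesis
  proof (rule ccontr)
    assume "q \<noteq> q'"
    then have "{0,q} \<noteq> {0,q'}" using \<open>q \<noteq> 0\<close> by (metis doubleton_eq_iff)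
    then show False using NC2_D(3)[OF assms] by auto
  qed
qed

lemma q_exists: assumes "\<pi> \<in> NC2 (Suc n)" shows "\<exists>q. 0 < q \<and> q \<le> n \<and> {0,q} \<in> \<pi>"
proof -
  have "0 \<in> \<Union>\<pi>" using NC2_D(2)[OF assms] by auto
  then obtain B where "B \<in> \<pi>" "0 \<in> B" by auto
  then obtain a b where "a<b" "b < Suc n" "B = {a,b}" using NC2_blk[OF assms] by metis
  moreover have "a = 0" using \<open>0 \<in> B\<close> \<open>a<b\<close> \<open>B = {a,b}\<close> by auto
  ultimately show ?thesis using \<open>B \<in> \<pi>\<close> by (intro exI[of _ b]) auto
qed

definition qof :: "nat set set \<Rightarrow> nat" where "qof \<pi> = (THE q. {0,q} \<in> \<pi>)"

lemma qof_eq: "\<pi> \<in> NC2 r \<Longrightarrow> {0,q} \<in> \<pi> \<Longrightarrow> qof \<pi> = q"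
  unfolding qof_def by (rule the_equality) (auto dest: q_unique)

lemma split_blk:
  assumes "\<pi> \<in> NC2 r" "{0,q} \<in> \<pi>" "C \<in> \<pi>" "C \<noteq> {0,q}"
  shows "(Max C < q \<or> q < Min C) \<and> 0 < Min C"
proof -
  obtain c d where cd: "c<d" "C = {c,d}" using NC2_blk[OF assms(1,3)] by metis
  have "{0,q} \<inter> C = {}" using NC2_D(3)[OF assms(1,2,3)] assms(4) by auto
  then have "c \<noteq> 0" "c \<noteq> q" "d \<noteq> q" using cd by auto
  moreover have "q \<noteq> 0" using NC2_D(1)[OF assms(1,2)] by (cases "q=0") auto
  moreover have "\<not> (Min {0,q} < Min C \<and> Min C < Max {0,q} \<and> Max {0,q} < Max C)"
    using NC2_D(4)[OF assms(1,2,3)] .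
  ultimately show ?thesis using cd by auto
qed

definition dec :: "nat set set \<Rightarrow> nat \<times> nat set set \<times> nat set set" where
  "dec \<pi> = (qof \<pi> - 1, ushS 1 ` {B\<in>\<pi>. Max B < qof \<pi>}, ushS (qof \<pi> + 1) ` {B\<in>\<pi>. qof \<pi> < Min B})"

lemma dec_props:
  assumes "\<pi> \<in> NC2 (Suc n)"
  shows "dec \<pi> \<in> (SIGMA j:{..<n}. NC2 j \<times> NC2 (n-1-j))"
    "comb (fst (dec \<pi>)) (fst (snd (dec \<pi>))) (snd (snd (dec \<pi>))) = \<pi>"
proof -
  obtain q where q: "0 < q" "q \<le> n" "{0,q} \<in> \<pi>" using q_exists[OF assms] by blast
  have qq: "qof \<pi> = q" using qof_eq[OF assms q(3)] .
  let ?s = "{B\<in>\<pi>. Max B < q}" and ?t = "{B\<in>\<pi>. q < Min B}"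
  note sp = split_blk[OF assms q(3)]
  have mm: "\<And>C x. C \<in> \<pi> \<Longrightarrow> x \<in> C \<Longrightarrow> Min C \<le> x \<and> x \<le> Max C"
    using NC2_blk[OF assms] by (metis Max_ge Min_le finite.emptyI finite.insertI)
  have notq: "\<And>C. C \<in> ?s \<union> ?t \<Longrightarrow> C \<noteq> {0,q}" using q by auto
  have cs: "\<forall>B\<in>?s. card B = 2" "\<forall>B\<in>?t. card B = 2" using NC2_D(1)[OF assms] by auto
  have ds: "\<forall>B\<in>?s. \<forall>C\<in>?s. B \<noteq> C \<longrightarrow> B \<inter> C = {}" "\<forall>B\<in>?t. \<forall>C\<in>?t. B \<noteq> C \<longrightarrow> B \<inter> C = {}"
    using NC2_D(3)[OF assms] by auto
  have ns: "\<forall>B\<in>?s. \<forall>C\<in>?s. \<not> (Min B < Min C \<and> Min C < Max B \<and> Max B < Max C)"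
     "\<forall>B\<in>?t. \<forall>C\<in>?t. \<not> (Min B < Min C \<and> Min C < Max B \<and> Max B < Max C)"
    using NC2_D(4)[OF assms] by auto
  have us: "\<Union>?s = {1..<1+(q-1)}"
  proof safe
    fix x C assume "x \<in> C" "C \<in> \<pi>" "Max C < q"
    then show "x \<in> {1..<1+(q-1)}" using sp[of C] notq[of C] mm[of C x] by auto
  next
    fix x assume x: "x \<in> {1..<1+(q-1)}"
    then have "x \<in> \<Union>\<pi>" using NC2_D(2)[OF assms] q by auto
    then obtain C where C: "C \<in> \<pi>" "x \<in> C" by auto
    then have "C \<noteq> {0,q}" using x by auto
    then have "Max C < q" using sp[OF C(1)] mm[OF C] x by auto
    then show "x \<in> \<Union>?s" using C by auto
  qed
  have ut: "\<Union>?t = {q+1..<(q+1)+(n-q)}"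
  proof safe
    fix x C assume "x \<in> C" "C \<in> \<pi>" "q < Min C"
    then show "x \<in> {q+1..<(q+1)+(n-q)}" using mm[of C x] NC2_D(2)[OF assms] q by auto
  next
    fix x assume x: "x \<in> {q+1..<(q+1)+(n-q)}"
    then have "x \<in> \<Union>\<pi>" using NC2_D(2)[OF assms] q by auto
    then obtain C where C: "C \<in> \<pi>" "x \<in> C" by auto
    then have "C \<noteq> {0,q}" using x by auto
    then have "q < Min C" using sp[OF C(1)] mm[OF C] x by auto
    then show "x \<in> \<Union>?t" using C by auto
  qed
  have s2: "ushS 1 ` ?s \<in> NC2 (q-1)" using unshift_NC2[OF cs(1) us ds(1) ns(1)] .
  have t2: "ushS (q+1) ` ?t \<in> NC2 (n-1-(q-1))" using unshift_NC2[OF cs(2) ut ds(2) ns(2)] q by simp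
  show "dec \<pi> \<in> (SIGMA j:{..<n}. NC2 j \<times> NC2 (n-1-j))"
    unfolding dec_def qq using s2 t2 q by auto
  have hs: "\<And>B. B \<in> ?s \<Longrightarrow> shS 1 (ushS 1 B) = B"
  proof -
    fix B assume "B \<in> ?s" have "\<forall>x\<in>B. 1 \<le> x"
    proof
      fix x assume "x \<in> B" then have "x \<in> \<Union>?s" using \<open>B \<in> ?s\<close> by blast
      then show "1 \<le> x" unfolding us by simp
    qed
    then show "shS 1 (ushS 1 B) = B" by (rule shS_ushS)
  qed
  have ss: "shS 1 ` ushS 1 ` ?s = ?s"
  proof -
    have "shS 1 ` ushS 1 ` ?s = (\<lambda>x. x) ` ?s" unfolding image_image by (rule image_cong[OF refl hs])
    then show ?thesis by simp
  qed
  have ht: "\<And>B. B \<in> ?t \<Longrightarrow> shS (q+1) (ushS (q+1) B) = B"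
  proof -
    fix B assume "B \<in> ?t" have "\<forall>x\<in>B. (q+1) \<le> x"
    proof
      fix x assume "x \<in> B" then have "x \<in> \<Union>?t" using \<open>B \<in> ?t\<close> by blast
      then show "(q+1) \<le> x" unfolding ut by simp
    qed
    then show "shS (q+1) (ushS (q+1) B) = B" by (rule shS_ushS)
  qed
  have tt: "shS (q+1) ` ushS (q+1) ` ?t = ?t"
  proof -
    have "shS (q+1) ` ushS (q+1) ` ?t = (\<lambda>x. x) ` ?t" unfolding image_image by (rule image_cong[OF refl ht])
    then show ?thesis by simp
  qed
  have "\<pi> = insert {0,q} (?s \<union> ?t)" using sp q(3) by blast
  then show "comb (fst (dec \<pi>)) (fst (snd (dec \<pi>))) (snd (snd (dec \<pi>))) = \<pi>"
    unfolding dec_def qq comb_def using q(1) ss tt by (simp add: Suc_diff_Suc)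
qed

lemma dec_comb:
  assumes "j < n" "\<sigma> \<in> NC2 j" "\<tau> \<in> NC2 (n-1-j)"
  shows "dec (comb j \<sigma> \<tau>) = (j, \<sigma>, \<tau>)"
proof -
  have N: "comb j \<sigma> \<tau> \<in> NC2 (Suc n)" using comb_NC2[OF assms] .
  have qq: "qof (comb j \<sigma> \<tau>) = Suc j" by (rule qof_eq[OF N]) (simp add: comb_def)
  note cc = comb_cases[OF _ assms(2) assms(3)]
  have s: "{B\<in>comb j \<sigma> \<tau>. Max B < Suc j} = shS 1 ` \<sigma>"
  proof safe
    fix B assume h: "B \<in> comb j \<sigma> \<tau>" "Max B < Suc j"
    show "B \<in> shS 1 ` \<sigma>"
    proof (rule cc[OF h(1)])
      assume "B = {0,Suc j}" then show ?thesis using h(2) by simp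
    next
      fix a b assume "a<b" "b<j" "{a,b}\<in>\<sigma>" "B={1+a,1+b}" then show ?thesis by (metis shS_pair image_eqI)
    next
      fix a b assume "a<b" "b<n-1-j" "{a,b}\<in>\<tau>" "B = {j+2+a,j+2+b}" then show ?thesis using h(2) by simp
    qed
  next
    fix B assume "B \<in> \<sigma>" then show "shS 1 B \<in> comb j \<sigma> \<tau>" by (simp add: comb_def)
    from \<open>B \<in> \<sigma>\<close> obtain a b where "a<b" "b<j" "B={a,b}" using NC2_blk[OF assms(2)] by metis
    then show "Max (shS 1 B) < Suc j" by simp
  qed
  have t: "{B\<in>comb j \<sigma> \<tau>. Suc j < Min B} = shS (j+2) ` \<tau>"
  proof safe
    fix B assume h: "B \<in> comb j \<sigma> \<tau>" "Suc j < Min B"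
    show "B \<in> shS (j+2) ` \<tau>"
    proof (rule cc[OF h(1)])
      assume "B = {0,Suc j}" then show ?thesis using h(2) by simp
    next
      fix a b assume "a<b" "b<j" "{a,b}\<in>\<sigma>" "B={1+a,1+b}" then show ?thesis using h(2) by simp
    next
      fix a b assume "a<b" "b<n-1-j" "{a,b}\<in>\<tau>" "B = {j+2+a,j+2+b}" then show ?thesis by (metis shS_pair image_eqI)
    qed
  next
    fix B assume "B \<in> \<tau>" then show "shS (j+2) B \<in> comb j \<sigma> \<tau>" by (simp add: comb_def)
    from \<open>B \<in> \<tau>\<close> obtain a b where "a<b" "B={a,b}" using NC2_blk[OF assms(3)] by metis
    then show "Suc j < Min (shS (j+2) B)" by simp
  qed
  have e1: "ushS 1 ` shS 1 ` \<sigma> = \<sigma>" by (simp add: image_comp)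
  have e2: "ushS (j+2) ` shS (j+2) ` \<tau> = \<tau>" by (simp add: image_comp)
  show ?thesis unfolding dec_def qq s using t e1 e2 by (simp add: numeral_2_eq_2)
qed

lemma prod_shS:
  assumes "\<sigma> \<in> NC2 r"
  shows "(\<Prod>B\<in>shS k ` \<sigma>. f (Min B) (Max B)) = (\<Prod>B\<in>\<sigma>. f (k + Min B) (k + Max B))"
proof -
  have "(\<Prod>B\<in>shS k ` \<sigma>. f (Min B) (Max B)) = (\<Prod>B\<in>\<sigma>. f (Min (shS k B)) (Max (shS k B)))"
    by (subst prod.reindex) (auto intro: inj_on_subset[OF inj_shS])
  also have "\<dots> = (\<Prod>B\<in>\<sigma>. f (k + Min B) (k + Max B))"
  proof (rule prod.cong[OF refl])
    fix B assume "B \<in> \<sigma>" then obtain a b where "a<b" "B={a,b}" using NC2_blk[OF assms] by metis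
    then show "f (Min (shS k B)) (Max (shS k B)) = f (k + Min B) (k + Max B)" by simp
  qed
  finally show ?thesis .
qed

lemma sum_prod3: "(\<Sum>(x,y)\<in>A \<times> B. (a::'b::comm_ring_1) * g x * h y) = a * sum g A * sum h B"
proof -
  have "a * sum g A * sum h B = (\<Sum>x\<in>A. \<Sum>y\<in>B. a * g x * h y)" by (simp only: sum_distrib_left sum_distrib_right) (rule sum.swap)
  then show ?thesis by (simp add: sum.cartesian_product)
qed

lemma NC2_rec:
  fixes f :: "nat \<Rightarrow> nat \<Rightarrow> 'b::comm_ring_1"
  shows "(\<Sum>\<pi>\<in>NC2 (Suc n). \<Prod>B\<in>\<pi>. f (Min B) (Max B)) =
    (\<Sum>j<n. f 0 (Suc j) * (\<Sum>\<sigma>\<in>NC2 j. \<Prod>B\<in>\<sigma>. f (1 + Min B) (1 + Max B))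
                        * (\<Sum>\<tau>\<in>NC2 (n-1-j). \<Prod>B\<in>\<tau>. f (j+2 + Min B) (j+2 + Max B)))"
proof -
  define P where "P \<pi> = (\<Prod>B\<in>\<pi>. f (Min B) (Max B))" for \<pi>
  let ?S = "SIGMA j:{..<n}. NC2 j \<times> NC2 (n-1-j)"
  have "(\<Sum>\<pi>\<in>NC2 (Suc n). P \<pi>) = (\<Sum>x\<in>?S. P (case x of (a,b,c) \<Rightarrow> comb a b c))"
  proof (rule sum.reindex_bij_witness[where j=dec and i="\<lambda>(a,b,c). comb a b c"])
    fix \<pi> assume "\<pi> \<in> NC2 (Suc n)"
    note dp = dec_props[OF this]
    obtain a b c where abc: "dec \<pi> = (a,b,c)" by (cases "dec \<pi>")
    show "(case dec \<pi> of (a,b,c) \<Rightarrow> comb a b c) = \<pi>" "dec \<pi> \<in> ?S"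
      using dp abc by simp_all
    then show "P (case dec \<pi> of (a,b,c) \<Rightarrow> comb a b c) = P \<pi>" by simp
  next
    fix x assume "x \<in> ?S"
    then show "dec (case x of (a,b,c) \<Rightarrow> comb a b c) = x" "(case x of (a,b,c) \<Rightarrow> comb a b c) \<in> NC2 (Suc n)"
      using dec_comb comb_NC2 by (auto split: prod.splits)
  qed
  also have "\<dots> = (\<Sum>(j,\<sigma>,\<tau>)\<in>?S. f 0 (Suc j) * (\<Prod>B\<in>\<sigma>. f (1 + Min B) (1 + Max B))
                        * (\<Prod>B\<in>\<tau>. f (j+2 + Min B) (j+2 + Max B)))"
  proof (rule sum.cong[OF refl])
    fix x assume "x \<in> ?S"
    then obtain j \<sigma> \<tau> where x: "x = (j,\<sigma>,\<tau>)" and a: "j < n" "\<sigma> \<in> NC2 j" "\<tau> \<in> NC2 (n-1-j)"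
      by (cases x) auto
    have fin: "finite (shS 1 ` \<sigma>)" "finite (shS (j+2) ` \<tau>)" using NC2_finite_pi a by auto
    have dj: "shS 1 ` \<sigma> \<inter> shS (j+2) ` \<tau> = {}"
    proof (rule ccontr)
      assume "shS 1 ` \<sigma> \<inter> shS (j+2) ` \<tau> \<noteq> {}"
      then obtain B C where "B \<in> \<sigma>" "C \<in> \<tau>" "shS 1 B = shS (j+2) C" by auto
      moreover obtain a b where "a<b" "b<j" "B={a,b}" using NC2_blk[OF a(2) \<open>B\<in>\<sigma>\<close>] by metis
      moreover obtain c d where "c<d" "C={c,d}" using NC2_blk[OF a(3) \<open>C\<in>\<tau>\<close>] by metis
      ultimately show False by (auto simp: doubleton_eq_iff)
    qed
    have ni: "{0, Suc j} \<notin> shS 1 ` \<sigma> \<union> shS (j+2) ` \<tau>"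
    proof
      assume "{0, Suc j} \<in> shS 1 ` \<sigma> \<union> shS (j+2) ` \<tau>"
      then obtain B where "{0, Suc j} = shS 1 B \<or> {0, Suc j} = shS (j+2) B" by auto
      then have "0 \<in> shS 1 B \<or> 0 \<in> shS (j+2) B" by (metis insertI1)
      then show False by (auto simp: shS_def)
    qed
    have pc: "P (comb j \<sigma> \<tau>) = f 0 (Suc j) * (\<Prod>B\<in>shS 1 ` \<sigma>. f (Min B) (Max B)) * (\<Prod>B\<in>shS (j+2) ` \<tau>. f (Min B) (Max B))"
      unfolding P_def comb_def using fin dj ni by (simp add: prod.union_disjoint mult.assoc)
    show "P (case x of (a,b,c) \<Rightarrow> comb a b c) = (case x of (j,\<sigma>,\<tau>) \<Rightarrow> f 0 (Suc j) * (\<Prod>B\<in>\<sigma>. f (1 + Min B) (1 + Max B))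
                        * (\<Prod>B\<in>\<tau>. f (j+2 + Min B) (j+2 + Max B)))"
      unfolding x by (simp only: prod.case pc prod_shS[OF a(2)] prod_shS[OF a(3)])
  qed
  also have "\<dots> = (\<Sum>j<n. \<Sum>(\<sigma>,\<tau>)\<in>NC2 j \<times> NC2 (n-1-j). f 0 (Suc j) * (\<Prod>B\<in>\<sigma>. f (1 + Min B) (1 + Max B))
                        * (\<Prod>B\<in>\<tau>. f (j+2 + Min B) (j+2 + Max B)))"
    by (subst sum.Sigma) (auto simp: NC2_finite)
  also have "\<dots> = (\<Sum>j<n. f 0 (Suc j) * (\<Sum>\<sigma>\<in>NC2 j. \<Prod>B\<in>\<sigma>. f (1 + Min B) (1 + Max B))
                        * (\<Sum>\<tau>\<in>NC2 (n-1-j). \<Prod>B\<in>\<tau>. f (j+2 + Min B) (j+2 + Max B)))"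
    by (rule sum.cong[OF refl]) (rule sum_prod3)
  finally show ?thesis unfolding P_def .
qed




locale ncp =
  fixes sc :: "complex \<Rightarrow> 'a::{real_normed_algebra_1,banach} \<Rightarrow> 'a"
    and st :: "'a \<Rightarrow> 'a" and phi :: "'a \<Rightarrow> complex"
  assumes nc: "nc_prob_space sc st phi"
begin

lemma sc_real_all: "\<forall>r x. sc (complex_of_real r) x = r *\<^sub>R x" using nc unfolding nc_prob_space_def by (elim conjE) assumption
lemma sc_real: "sc (complex_of_real (r::real)) (x::'a) = r *\<^sub>R x" using sc_real_all by (elim allE)
lemma sc_addl_all: "\<forall>c d x. sc (c + d) x = sc c x + sc d x" using nc unfolding nc_prob_space_def by (elim conjE) assumption
lemma sc_addl: "sc (c + d) x = sc c x + sc d x" using sc_addl_all by (elim allE)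
lemma sc_addr_all: "\<forall>c x y. sc c (x + y) = sc c x + sc c y" using nc unfolding nc_prob_space_def by (elim conjE) assumption
lemma sc_addr: "sc c (x + y) = sc c x + sc c y" using sc_addr_all by (elim allE)
lemma sc_sc_all: "\<forall>c d x. sc (c * d) x = sc c (sc d x)" using nc unfolding nc_prob_space_def by (elim conjE) assumption
lemma sc_sc: "sc c (sc d x) = sc (c * d) x" by (rule sc_sc_all[rule_format, symmetric])
lemma sc_multl_all: "\<forall>c x y. sc c (x * y) = sc c x * y" using nc unfolding nc_prob_space_def by (elim conjE) assumption
lemma sc_multl: "sc c x * y = sc c (x * y)" by (rule sc_multl_all[rule_format, symmetric])
lemma sc_multr_all: "\<forall>c x y. sc c (x * y) = x * sc c y" using nc unfolding nc_prob_space_def by (elim conjE) assumption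
lemma sc_multr: "x * sc c y = sc c (x * y)" by (rule sc_multr_all[rule_format, symmetric])
lemma st_add_all: "\<forall>x y. st (x + y) = st x + st y" using nc unfolding nc_prob_space_def by (elim conjE) assumption
lemma st_add: "st (x + y) = st x + st y" using st_add_all by (elim allE)
lemma st_sc_all: "\<forall>c x. st (sc c x) = sc (cnj c) (st x)" using nc unfolding nc_prob_space_def by (elim conjE) assumption
lemma st_sc: "st (sc c x) = sc (cnj c) (st x)" using st_sc_all by (elim allE)
lemma st_mult_all: "\<forall>x y. st (x * y) = st y * st x" using nc unfolding nc_prob_space_def by (elim conjE) assumption
lemma st_mult: "st (x * y) = st y * st x" using st_mult_all by (elim allE)
lemma st_st_all: "\<forall>x. st (st x) = x" using nc unfolding nc_prob_space_def by (elim conjE) assumption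
lemma st_st[simp]: "st (st x) = x" using st_st_all by (elim allE)
lemma phi_add_all: "\<forall>x y. phi (x + y) = phi x + phi y" using nc unfolding nc_prob_space_def by (elim conjE) assumption
lemma phi_add: "phi (x + y) = phi x + phi y" using phi_add_all by (elim allE)
lemma phi_sc_all: "\<forall>c x. phi (sc c x) = c * phi x" using nc unfolding nc_prob_space_def by (elim conjE) assumption
lemma phi_sc: "phi (sc c x) = c * phi x" using phi_sc_all by (elim allE)
lemma phi_one[simp]: "phi 1 = 1" using nc unfolding nc_prob_space_def by (elim conjE) assumption
lemma phi_comm_all: "\<forall>x y. phi (x * y) = phi (y * x)" using nc unfolding nc_prob_space_def by (elim conjE) assumption
lemma phi_comm: "phi (x * y) = phi (y * x)" using phi_comm_all by (elim allE)
lemma phi_pos_all: "\<forall>x. Im (phi (st x * x)) = 0 \<and> Re (phi (st x * x)) \<ge> 0" using nc unfolding nc_prob_space_def by (elim conjE) assumption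
lemma phi_pos: "Im (phi (st x * x)) = 0" using phi_pos_all by simp

lemma sc_one[simp]: "sc 1 x = x" using sc_real[of 1 x] by simp
lemma sc_zero_l[simp]: "sc 0 x = 0" using sc_real[of 0 x] by simp
lemma sc_zero_r[simp]: "sc c 0 = 0" using sc_addr[of c 0 0] by simp
lemma st_zero[simp]: "st 0 = 0" using st_add[of 0 0] by simp
lemma phi_zero[simp]: "phi 0 = 0" using phi_add[of 0 0] by simp
lemma st_one[simp]: "st 1 = 1"
proof -
  have "st (st 1 * 1) = st 1 * st (st 1)" by (rule st_mult)
  then show ?thesis by simp
qed
lemma st_scaleR: "st (r *\<^sub>R x) = r *\<^sub>R st x" using st_sc[of "complex_of_real r" x] by (simp add: sc_real)
lemma phi_scaleR: "phi (r *\<^sub>R x) = complex_of_real r * phi x" using phi_sc[of "complex_of_real r" x] by (simp add: sc_real)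
lemma st_minus: "st (- x) = - st x" using st_scaleR[of "-1" x] by simp
lemma st_diff: "st (x - y) = st x - st y" using st_add[of x "-y"] st_minus by simp
lemma phi_minus: "phi (- x) = - phi x" using phi_scaleR[of "-1" x] by simp
lemma phi_diff: "phi (x - y) = phi x - phi y" using phi_add[of x "-y"] phi_minus by simp

lemma phi_herm: "phi (st x) = cnj (phi x)"
proof -
  let ?a = "phi (st x)" and ?b = "phi x"
  have "st (x + 1) * (x + 1) = st x * x + st x + x + 1" by (simp add: st_add algebra_simps)
  then have "Im (phi (st x * x) + ?a + ?b + 1) = 0" using phi_pos[of "x+1"] by (simp add: phi_add)
  then have i1: "Im ?a + Im ?b = 0" using phi_pos[of x] by simp
  have e: "st (x + sc \<i> 1) * (x + sc \<i> 1) = st x * x + sc \<i> (st x) + sc (-\<i>) x + 1"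
    by (simp add: st_add st_sc sc_multl sc_multr sc_sc sc_addr algebra_simps)
  have "Im (phi (st x * x) + \<i> * ?a + (-\<i>) * ?b + 1) = 0" using phi_pos[of "x + sc \<i> 1"]
    unfolding e by (simp add: phi_add phi_sc)
  then have i2: "Re ?a - Re ?b = 0" using phi_pos[of x] by simp
  show ?thesis using i1 i2 by (simp add: complex_eq_iff)
qed

lemma additive_sum_list:
  assumes "\<And>x y. f (x + y) = f x + f y" "f 0 = 0"
  shows "f (sum_list (map g xs)) = sum_list (map (\<lambda>x. f (g x)) xs)"
  by (induct xs) (simp_all add: assms)

lemma phi_sum_list: "phi (sum_list (map g xs)) = (\<Sum>x\<leftarrow>xs. phi (g x))"
  by (rule additive_sum_list) (simp_all add: phi_add)
lemma st_sum_list: "st (sum_list (map g xs)) = (\<Sum>x\<leftarrow>xs. st (g x))"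
  by (rule additive_sum_list) (simp_all add: st_add)
lemma sc_sum_list: "sc c (sum_list (map g xs)) = (\<Sum>x\<leftarrow>xs. sc c (g x))"
  by (rule additive_sum_list) (simp_all add: sc_addr)

lemma st_prod_list: "st (prod_list xs) = prod_list (rev (map st xs))"
  by (induct xs) (simp_all add: st_mult)

end




fun splits :: "'b list \<Rightarrow> ('b list \<times> 'b \<times> 'b list) list" where
  "splits [] = []"
| "splits (x # xs) = ([], x, xs) # map (\<lambda>(u,y,v). (x # u, y, v)) (splits xs)"

lemma splits_append:
  "splits (a @ b) = map (\<lambda>(u,y,v). (u, y, v @ b)) (splits a) @ map (\<lambda>(u,y,v). (a @ u, y, v)) (splits b)"
  by (induct a) (auto simp: case_prod_unfold)

lemma splits_append_cons:
  "splits (a @ x # b) = map (\<lambda>(u,y,v). (u, y, v @ x # b)) (splits a) @ ((a, x, b) # map (\<lambda>(u,y,v). (a @ x # u, y, v)) (splits b))"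
  by (simp add: splits_append case_prod_unfold)

lemma splits_map: "splits (map f l) = map (\<lambda>(u,y,v). (map f u, f y, map f v)) (splits l)"
  by (induct l) (auto simp: case_prod_unfold)

lemma splits_rev: "splits (rev a) = rev (map (\<lambda>(u,y,v). (rev v, y, rev u)) (splits a))"
  by (induct a) (auto simp: splits_append case_prod_unfold rev_map)

lemma splits_index: "splits l = map (\<lambda>j. (take j l, l ! j, drop (Suc j) l)) [0..<length l]"
proof (induct l)
  case Nil then show ?case by simp
next
  case (Cons x l)
  have "[0..<length (x#l)] = 0 # map Suc [0..<length l]"
    by (simp only: length_Cons upt_conv_Cons[OF zero_less_Suc] map_Suc_upt)
  then show ?case using Cons by simp
qed

definition lin :: "(real \<Rightarrow> 'b::real_vector) \<Rightarrow> (real \<times> real) list \<Rightarrow> 'b" where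
  "lin X L = (\<Sum>(r,t)\<leftarrow>L. r *\<^sub>R X t)"

definition hL :: "stepfn \<Rightarrow> (real \<times> real) list" where
  "hL h = concat (map (\<lambda>(\<alpha>,a,b). [(\<alpha>,b),(-\<alpha>,a)]) h)"

lemma Xh_lin: "Xh X h = lin X (hL h)"
  by (induct h) (auto simp: Xh_def lin_def hL_def scaleR_diff_right)

lemma hL_in: "step_in T h \<Longrightarrow> set (map snd (hL h)) \<subseteq> {0..T}"
  by (induct h) (auto simp: step_in_def hL_def)

definition ml :: "('b::real_vector list \<Rightarrow> complex) \<Rightarrow> bool" where
  "ml F \<longleftrightarrow> (\<forall>ws us x y. F (ws @ (x + y) # us) = F (ws @ x # us) + F (ws @ y # us)) \<and>
            (\<forall>ws us r x. F (ws @ (r *\<^sub>R x) # us) = complex_of_real r * F (ws @ x # us))"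

lemma ml_lin:
  assumes "ml F"
  shows "F (ws @ lin X L # us) = (\<Sum>(r,t)\<leftarrow>L. complex_of_real r * F (ws @ X t # us))"
proof (induct L)
  case Nil
  have "F (ws @ ((0::real) *\<^sub>R 0) # us) = complex_of_real 0 * F (ws @ 0 # us)" using assms unfolding ml_def by blast
  then show ?case by (simp add: lin_def)
next
  case (Cons p L)
  obtain r t where p: "p = (r,t)" by (cases p)
  have "lin X (p # L) = r *\<^sub>R X t + lin X L" by (simp add: lin_def p)
  then show ?case using Cons assms unfolding ml_def by (simp add: p)
qed

lemma ml_ext:
  assumes "ml F" "ml G" "\<And>ts. set ts \<subseteq> A \<Longrightarrow> F (map X ts) = G (map X ts)"
  shows "set ts \<subseteq> A \<Longrightarrow> \<forall>L\<in>set Ls. set (map snd L) \<subseteq> A \<Longrightarrow>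
    F (map X ts @ map (lin X) Ls) = G (map X ts @ map (lin X) Ls)"
proof (induct Ls arbitrary: ts)
  case Nil then show ?case using assms(3) by simp
next
  case (Cons L Ls)
  have "F (map X ts @ map (lin X) (L # Ls)) = (\<Sum>(r,t)\<leftarrow>L. complex_of_real r * F (map X ts @ X t # map (lin X) Ls))"
    using ml_lin[OF assms(1)] by simp
  also have "\<dots> = (\<Sum>(r,t)\<leftarrow>L. complex_of_real r * G (map X ts @ X t # map (lin X) Ls))"
  proof (rule arg_cong[where f=sum_list], rule map_cong[OF refl], clarify)
    fix r t assume "(r,t) \<in> set L"
    then have "t \<in> A" using Cons.prems by force
    then have "F (map X (ts @ [t]) @ map (lin X) Ls) = G (map X (ts @ [t]) @ map (lin X) Ls)"
      using Cons.hyps[of "ts @ [t]"] Cons.prems by simp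
    then show "complex_of_real r * F (map X ts @ X t # map (lin X) Ls) = complex_of_real r * G (map X ts @ X t # map (lin X) Ls)"
      by simp
  qed
  also have "\<dots> = G (map X ts @ map (lin X) (L # Ls))"
    using ml_lin[OF assms(2)] by simp
  finally show ?case .
qed

context ncp begin

definition Fm :: "'a list \<Rightarrow> complex" where "Fm l = phi (prod_list l)"
definition Gm :: "'a list \<Rightarrow> complex" where
  "Gm l = (case l of [] \<Rightarrow> 1 | x # ws \<Rightarrow> (\<Sum>(u,y,v)\<leftarrow>splits ws. phi (x * y) * (phi (prod_list u) * phi (prod_list v))))"

lemma prod_list_mid: "prod_list (a @ x # b) = prod_list a * x * prod_list b"
  by (simp add: mult.assoc)

lemma Fm_add: "phi (prod_list (a @ (x + y) # b)) = phi (prod_list (a @ x # b)) + phi (prod_list (a @ y # b))"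
  by (simp add: prod_list_mid algebra_simps phi_add)
lemma Fm_scale: "phi (prod_list (a @ (r *\<^sub>R x) # b)) = complex_of_real r * phi (prod_list (a @ x # b))"
  by (simp add: prod_list_mid phi_scaleR[symmetric])

lemma ml_Fm: "ml Fm" unfolding ml_def Fm_def using Fm_add Fm_scale by blast

lemma phi_mult_add: "phi (z * (x + y)) = phi (z * x) + phi (z * y)" "phi ((x + y) * z) = phi (x * z) + phi (y * z)"
  by (simp_all add: algebra_simps phi_add)
lemma phi_mult_scale: "phi (z * (r *\<^sub>R x)) = complex_of_real r * phi (z * x)" "phi ((r *\<^sub>R x) * z) = complex_of_real r * phi (x * z)"
  by (simp_all add: phi_scaleR[symmetric])

lemma sum_lin_add: "(\<Sum>p\<leftarrow>L. g p * phi (prod_list (a p @ (x+y) # b p))) =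
   (\<Sum>p\<leftarrow>L. g p * phi (prod_list (a p @ x # b p))) + (\<Sum>p\<leftarrow>L. g p * phi (prod_list (a p @ y # b p)))"
  by (induct L) (simp, simp only: list.map sum_list.Cons Fm_add distrib_left, simp add: algebra_simps)
lemma sum_lin_scale: "(\<Sum>p\<leftarrow>L. g p * phi (prod_list (a p @ (r *\<^sub>R x) # b p))) =
   complex_of_real r * (\<Sum>p\<leftarrow>L. g p * phi (prod_list (a p @ x # b p)))"
  by (induct L) (simp, simp only: list.map sum_list.Cons Fm_scale distrib_left, simp add: algebra_simps)

lemma Gm_cons_split: "Gm (w # ws' @ z # us) =
   (\<Sum>p\<leftarrow>splits ws'. (phi (w * fst (snd p)) * phi (prod_list (fst p))) * phi (prod_list (snd (snd p) @ z # us)))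
 + phi (w * z) * (phi (prod_list ws') * phi (prod_list us))
 + (\<Sum>p\<leftarrow>splits us. (phi (w * fst (snd p)) * phi (prod_list (snd (snd p)))) * phi (prod_list (ws' @ z # fst p)))"
  by (simp add: Gm_def splits_append_cons o_def case_prod_unfold mult_ac)

lemma Gm_nil_split: "Gm (z # us) = (\<Sum>p\<leftarrow>splits us. phi (z * fst (snd p)) * (phi (prod_list (fst p)) * phi (prod_list (snd (snd p)))))"
  by (simp add: Gm_def case_prod_unfold)

lemma ml_Gm: "ml Gm"
  unfolding ml_def
proof (intro conjI allI)
  fix ws us x y
  show "Gm (ws @ (x + y) # us) = Gm (ws @ x # us) + Gm (ws @ y # us)"
  proof (cases ws)
    case Nil then show ?thesis
      by (simp only: Nil append_Nil Gm_nil_split distrib_right phi_add sum_list_addf)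
  next
    case (Cons w ws')
    then show ?thesis
      by (simp only: append_Cons Gm_cons_split sum_lin_add phi_mult_add(1) distrib_right) (simp add: algebra_simps)
  qed
next
  fix ws us r x
  show "Gm (ws @ (r *\<^sub>R x) # us) = complex_of_real r * Gm (ws @ x # us)"
  proof (cases ws)
    case Nil then show ?thesis
      by (simp only: Nil append_Nil Gm_nil_split phi_mult_scale(2) mult.assoc sum_list_const_mult)
  next
    case (Cons w ws')
    then show ?thesis
      by (simp only: append_Cons Gm_cons_split sum_lin_scale phi_mult_scale(1)) (simp add: algebra_simps)
  qed
qed

end




context ncp begin

lemma wick:
  assumes sp: "semicircular_process st phi T X" and l: "set l \<subseteq> {0..T}"
  shows "phi (prod_list (map X l)) = (\<Sum>\<pi>\<in>NC2 (length l). \<Prod>B\<in>\<pi>. phi (X (l ! Min B) * X (l ! Max B)))"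
proof -
  have e: "phi (prod_list (map X l)) = (if even (length l)
           then (\<Sum>\<pi>\<in>NC2 (length l). \<Prod>B\<in>\<pi>. phi (X (l ! Min B) * X (l ! Max B))) else 0)"
    using sp l unfolding semicircular_process_def by blast
  show ?thesis
  proof (cases "even (length l)")
    case True then show ?thesis using e by simp
  next
    case False
    then have "NC2 (length l) = {}" using NC2_even by blast
    then show ?thesis using e False by simp
  qed
qed

lemma R0:
  assumes sp: "semicircular_process st phi T X" and l: "set (t0 # ts) \<subseteq> {0..T}"
  shows "Fm (map X (t0 # ts)) = Gm (map X (t0 # ts))"
proof -
  define n where "n = length ts"
  define l where "l = t0 # ts"
  define f where "f p q = phi (X (l ! p) * X (l ! q))" for p q
  have lT: "set l \<subseteq> {0..T}" using l l_def by simp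
  have "Fm (map X l) = (\<Sum>\<pi>\<in>NC2 (Suc n). \<Prod>B\<in>\<pi>. f (Min B) (Max B))"
    using wick[OF sp lT] by (simp add: Fm_def f_def l_def n_def)
  also have "\<dots> = (\<Sum>j<n. f 0 (Suc j) * (\<Sum>\<sigma>\<in>NC2 j. \<Prod>B\<in>\<sigma>. f (1 + Min B) (1 + Max B))
                        * (\<Sum>\<tau>\<in>NC2 (n-1-j). \<Prod>B\<in>\<tau>. f (j+2 + Min B) (j+2 + Max B)))"
    by (rule NC2_rec)
  also have "\<dots> = (\<Sum>j<n. phi (X t0 * X (ts ! j)) * (phi (prod_list (map X (take j ts))) * phi (prod_list (map X (drop (Suc j) ts)))))"
  proof (rule sum.cong[OF refl])
    fix j assume "j \<in> {..<n}"
    then have j: "j < n" by simp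
    have tT: "set (take j ts) \<subseteq> {0..T}" "set (drop (Suc j) ts) \<subseteq> {0..T}"
      using l by (auto dest: in_set_takeD in_set_dropD)
    have s1: "(\<Sum>\<sigma>\<in>NC2 j. \<Prod>B\<in>\<sigma>. f (1 + Min B) (1 + Max B)) = phi (prod_list (map X (take j ts)))"
    proof -
      have "phi (prod_list (map X (take j ts))) = (\<Sum>\<pi>\<in>NC2 j. \<Prod>B\<in>\<pi>. phi (X (take j ts ! Min B) * X (take j ts ! Max B)))"
        using wick[OF sp tT(1)] j n_def by simp
      also have "\<dots> = (\<Sum>\<sigma>\<in>NC2 j. \<Prod>B\<in>\<sigma>. f (1 + Min B) (1 + Max B))"
      proof (rule sum.cong[OF refl], rule prod.cong[OF refl])
        fix \<sigma> B assume "\<sigma> \<in> NC2 j" "B \<in> \<sigma>"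
        then obtain a b where "a<b" "b<j" "B={a,b}" using NC2_blk by metis
        then show "phi (X (take j ts ! Min B) * X (take j ts ! Max B)) = f (1 + Min B) (1 + Max B)"
          by (simp add: f_def l_def)
      qed
      finally show ?thesis by simp
    qed
    have s2: "(\<Sum>\<tau>\<in>NC2 (n-1-j). \<Prod>B\<in>\<tau>. f (j+2 + Min B) (j+2 + Max B)) = phi (prod_list (map X (drop (Suc j) ts)))"
    proof -
      have "phi (prod_list (map X (drop (Suc j) ts))) = (\<Sum>\<pi>\<in>NC2 (n-1-j). \<Prod>B\<in>\<pi>. phi (X (drop (Suc j) ts ! Min B) * X (drop (Suc j) ts ! Max B)))"
        using wick[OF sp tT(2)] j n_def by simp
      also have "\<dots> = (\<Sum>\<tau>\<in>NC2 (n-1-j). \<Prod>B\<in>\<tau>. f (j+2 + Min B) (j+2 + Max B))"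
      proof (rule sum.cong[OF refl], rule prod.cong[OF refl])
        fix \<sigma> B assume "\<sigma> \<in> NC2 (n-1-j)" "B \<in> \<sigma>"
        then obtain a b where "a<b" "b<n-1-j" "B={a,b}" using NC2_blk by metis
        then show "phi (X (drop (Suc j) ts ! Min B) * X (drop (Suc j) ts ! Max B)) = f (j+2 + Min B) (j+2 + Max B)"
          using j by (simp add: f_def l_def n_def)
      qed
      finally show ?thesis by simp
    qed
    show "f 0 (Suc j) * (\<Sum>\<sigma>\<in>NC2 j. \<Prod>B\<in>\<sigma>. f (1 + Min B) (1 + Max B))
                        * (\<Sum>\<tau>\<in>NC2 (n-1-j). \<Prod>B\<in>\<tau>. f (j+2 + Min B) (j+2 + Max B)) =
      phi (X t0 * X (ts ! j)) * (phi (prod_list (map X (take j ts))) * phi (prod_list (map X (drop (Suc j) ts))))"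
      unfolding s1 s2 by (simp add: f_def l_def mult.assoc)
  qed
  also have "\<dots> = Gm (map X l)"
    by (simp add: Gm_def l_def splits_map splits_index case_prod_unfold interv_sum_list_conv_sum_set_nat
        atLeast0LessThan n_def take_map drop_map)
  finally show ?thesis unfolding l_def .
qed

lemma Xh_lin_fun: "Xh X = (\<lambda>h. lin X (hL h))" by (rule ext, rule Xh_lin)

lemma R1:
  assumes sp: "semicircular_process st phi T X" and h: "step_in T h" and hs: "\<forall>g\<in>set hs. step_in T g"
  shows "phi (Xh X h * prod_list (map (Xh X) hs)) =
    (\<Sum>(u,y,v)\<leftarrow>splits hs. phi (Xh X h * Xh X y) * (phi (prod_list (map (Xh X) u)) * phi (prod_list (map (Xh X) v))))"
proof -
  have gen: "Fm (map X ts) = Gm (map X ts)" if "set ts \<subseteq> {0..T}" for ts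
  proof (cases ts)
    case Nil then show ?thesis by (simp add: Fm_def Gm_def)
  next
    case (Cons t0 ts') then show ?thesis using R0[OF sp] that by simp
  qed
  have hl: "\<forall>L\<in>set (map hL (h # hs)). set (map snd L) \<subseteq> {0..T}" using h hs hL_in by auto
  have "Fm (map X [] @ map (lin X) (map hL (h # hs))) = Gm (map X [] @ map (lin X) (map hL (h # hs)))"
    using ml_ext[OF ml_Fm ml_Gm, of "{0..T}" X "[]" "map hL (h # hs)"] gen hl by simp
  then have "Fm (map (Xh X) (h # hs)) = Gm (map (Xh X) (h # hs))" by (simp add: o_def Xh_lin_fun)
  then show ?thesis by (simp add: Fm_def Gm_def splits_map case_prod_unfold o_def)
qed

end




lemma splits_mem: "(u,y,v) \<in> set (splits l) \<Longrightarrow> l = u @ y # v"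
  by (induct l arbitrary: u) auto

locale ncs = ncp sc st phi for sc :: "complex \<Rightarrow> 'a::{real_normed_algebra_1,banach} \<Rightarrow> 'a" and st phi +
  fixes T :: real and X :: "real \<Rightarrow> 'a"
  assumes sp: "semicircular_process st phi T X"
begin

definition M :: "stepfn list \<Rightarrow> 'a" where "M l = prod_list (map (Xh X) l)"

lemma M_append: "M (a @ b) = M a * M b" by (simp add: M_def)
lemma M_Cons: "M (a # b) = Xh X a * M b" by (simp add: M_def)
lemma M_Nil: "M [] = 1" by (simp add: M_def)

lemma st_X: "t \<in> {0..T} \<Longrightarrow> st (X t) = X t" using sp unfolding semicircular_process_def by blast

lemma st_Xh: assumes "step_in T h" shows "st (Xh X h) = Xh X h"
proof -
  have "\<forall>p\<in>set h. case p of (\<alpha>, a, b) \<Rightarrow> 0 \<le> a \<and> a < b \<and> b \<le> T" using assms by (simp add: step_in_def)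
  then show ?thesis
    by (induct h) (auto simp: Xh_def st_add st_scaleR st_diff st_X)
qed

lemma st_M: "\<forall>g\<in>set l. step_in T g \<Longrightarrow> st (M l) = M (rev l)"
  by (induct l) (simp_all add: M_def st_mult st_Xh)

lemma ipH_cnj: "step_in T y \<Longrightarrow> step_in T h \<Longrightarrow> cnj (ipH phi X y h) = phi (Xh X h * Xh X y)"
  by (simp add: ipH_def phi_herm[symmetric] st_mult st_Xh)

lemma ipH_sym: "ipH phi X y h = phi (Xh X h * Xh X y)"
  by (simp add: ipH_def phi_comm)

lemma phi_cnj_M: "\<forall>g\<in>set l. step_in T g \<Longrightarrow> cnj (phi (M l)) = phi (M (rev l))"
  by (simp add: phi_herm[symmetric] st_M)

lemma R1M:
  assumes "step_in T h" "\<forall>g\<in>set hs. step_in T g"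
  shows "phi (Xh X h * M hs) = (\<Sum>(u,y,v)\<leftarrow>splits hs. phi (Xh X h * Xh X y) * (phi (M u) * phi (M v)))"
  using R1[OF sp assms] by (simp add: M_def)

lemma core:
  assumes h: "step_in T h" and gs: "\<forall>g\<in>set (ys @ as @ bs). step_in T g"
  shows "phi (M ys * st (M as * Xh X h * M bs))
   - (\<Sum>(u,y,v)\<leftarrow>splits as. cnj (phi (M v) * ipH phi X y h) * phi (M ys * st (M u * M bs)))
   - (\<Sum>(u,y,v)\<leftarrow>splits bs. cnj (phi (M u) * ipH phi X y h) * phi (M ys * st (M as * M v)))
   = (\<Sum>(u,y,v)\<leftarrow>splits ys. ipH phi X y h * (phi (M u * M (rev as)) * phi (M v * M (rev bs))))"
proof -
  let ?w = "rev as @ ys @ rev bs"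
  have gw: "\<forall>g\<in>set ?w. step_in T g" using gs by auto
  have "phi (M ys * st (M as * Xh X h * M bs)) = phi ((M ys * M (rev bs)) * (Xh X h * M (rev as)))"
    using gs h by (simp add: st_mult st_M st_Xh mult.assoc)
  also have "\<dots> = phi (Xh X h * M ?w)" by (subst phi_comm) (simp add: M_append mult.assoc)
  also have "\<dots> = (\<Sum>(u,y,v)\<leftarrow>splits ?w. phi (Xh X h * Xh X y) * (phi (M u) * phi (M v)))"
    by (rule R1M[OF h gw])
  also have "\<dots> = (\<Sum>(u,y,v)\<leftarrow>splits as. phi (Xh X h * Xh X y) * (phi (M (rev v)) * phi (M (rev u @ ys @ rev bs))))
     + (\<Sum>(u,y,v)\<leftarrow>splits ys. phi (Xh X h * Xh X y) * (phi (M (rev as @ u)) * phi (M (v @ rev bs))))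
     + (\<Sum>(u,y,v)\<leftarrow>splits bs. phi (Xh X h * Xh X y) * (phi (M (rev as @ ys @ rev v)) * phi (M (rev u))))"
    by (simp add: splits_append splits_rev case_prod_unfold o_def rev_map[symmetric] sum_list_rev add.assoc)
  finally have main: "phi (M ys * st (M as * Xh X h * M bs)) = \<dots>" .
  have ca: "(\<Sum>(u,y,v)\<leftarrow>splits as. cnj (phi (M v) * ipH phi X y h) * phi (M ys * st (M u * M bs)))
      = (\<Sum>(u,y,v)\<leftarrow>splits as. phi (Xh X h * Xh X y) * (phi (M (rev v)) * phi (M (rev u @ ys @ rev bs))))"
  proof (rule arg_cong[where f=sum_list], rule map_cong[OF refl], clarify)
    fix u y v assume "(u,y,v) \<in> set (splits as)"
    then have e: "as = u @ y # v" by (rule splits_mem)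
    then have g: "\<forall>g\<in>set u. step_in T g" "\<forall>g\<in>set v. step_in T g" "step_in T y" "\<forall>g\<in>set bs. step_in T g" using gs by auto
    have "phi (M ys * st (M u * M bs)) = phi (M (rev u) * (M ys * M (rev bs)))"
      using g by (simp add: st_mult st_M) (subst phi_comm, simp add: mult.assoc)
    then show "cnj (phi (M v) * ipH phi X y h) * phi (M ys * st (M u * M bs)) =
       phi (Xh X h * Xh X y) * (phi (M (rev v)) * phi (M (rev u @ ys @ rev bs)))"
      using g h by (simp add: phi_cnj_M ipH_cnj M_append)
  qed
  have cb: "(\<Sum>(u,y,v)\<leftarrow>splits bs. cnj (phi (M u) * ipH phi X y h) * phi (M ys * st (M as * M v)))
      = (\<Sum>(u,y,v)\<leftarrow>splits bs. phi (Xh X h * Xh X y) * (phi (M (rev as @ ys @ rev v)) * phi (M (rev u))))"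
  proof (rule arg_cong[where f=sum_list], rule map_cong[OF refl], clarify)
    fix u y v assume "(u,y,v) \<in> set (splits bs)"
    then have e: "bs = u @ y # v" by (rule splits_mem)
    then have g: "\<forall>g\<in>set u. step_in T g" "\<forall>g\<in>set v. step_in T g" "step_in T y" "\<forall>g\<in>set as. step_in T g" using gs by auto
    have "phi (M ys * st (M as * M v)) = phi (M (rev as) * (M ys * M (rev v)))"
      using g by (simp add: st_mult st_M) (subst phi_comm, simp add: mult.assoc)
    then show "cnj (phi (M u) * ipH phi X y h) * phi (M ys * st (M as * M v)) =
       phi (Xh X h * Xh X y) * (phi (M (rev as @ ys @ rev v)) * phi (M (rev u)))"
      using g h by (simp add: phi_cnj_M ipH_cnj M_append mult_ac)
  qed
  have cy: "(\<Sum>(u,y,v)\<leftarrow>splits ys. phi (Xh X h * Xh X y) * (phi (M (rev as @ u)) * phi (M (v @ rev bs))))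
     = (\<Sum>(u,y,v)\<leftarrow>splits ys. ipH phi X y h * (phi (M u * M (rev as)) * phi (M v * M (rev bs))))"
    by (simp add: ipH_sym M_append phi_comm[of "M (rev as)"])
  show ?thesis unfolding main ca cb cy by simp
qed

end




lemma sum_list_swap: "(\<Sum>x\<leftarrow>xs. \<Sum>y\<leftarrow>ys. f x y) = (\<Sum>y\<leftarrow>ys. \<Sum>x\<leftarrow>xs. (f x y :: 'b::comm_monoid_add))"
  by (induct xs) (simp_all add: sum_list_addf)

lemma sum_list_map_concat: "sum_list (map f (concat xss)) = (\<Sum>xs\<leftarrow>xss. sum_list (map f xs))"
  by (induct xss) simp_all

lemma sum_list_concat': "sum_list (concat xss) = (\<Sum>xs\<leftarrow>xss. sum_list xs)"
  by (induct xss) simp_all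

context ncs begin

abbreviation E :: "polyX \<Rightarrow> 'a" where "E P \<equiv> evalX sc X P"

lemma E_def2: "E P = (\<Sum>(c,hs)\<leftarrow>P. sc c (M hs))" by (simp add: evalX_def M_def)

lemma DX_splits: "DX sc X P = concat (map (\<lambda>(c,hs). map (\<lambda>(u,y,v). ([(sc c (M u), M v)], y)) (splits hs)) P)"
  unfolding DX_def
  by (rule arg_cong[where f=concat], rule map_cong[OF refl]) (auto simp: splits_index M_def take_map drop_map)

definition corr1 where "corr1 P1 E2 h = (\<Sum>(c,hs)\<leftarrow>P1. \<Sum>(u,y,v)\<leftarrow>splits hs. sc (phi (M v)) (sc (ipH phi X y h) (sc c (M u)) * E2))"
definition corr2 where "corr2 E1 P2 h = (\<Sum>(c,hs)\<leftarrow>P2. \<Sum>(u,y,v)\<leftarrow>splits hs. sc (phi (sc c (M u))) (sc (ipH phi X y h) E1 * M v))"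

lemma delta_term: "sharp [(E P1, E P2)] (Xh X h) - IdphiId sc phi (pairH3 sc phi X (DX2 sc X P1 P2) h)
  = E P1 * Xh X h * E P2 - corr1 P1 (E P2) h - corr2 (E P1) P2 h"
  unfolding DX2_def
  by (simp add: sharp_def IdphiId_def pairH3_def DX_splits corr1_def corr2_def tens3_scale_def
    sum_list_map_concat sum_list_concat' map_concat case_prod_unfold o_def)


definition A :: "stepfn list \<Rightarrow> 'a \<Rightarrow> complex" where "A ys x = phi (M ys * st x)"

lemma A_add: "A ys (x + y) = A ys x + A ys y" by (simp add: A_def st_add distrib_left phi_add)
lemma A_sc: "A ys (sc c x) = cnj c * A ys x" by (simp add: A_def st_sc sc_multr phi_sc)
lemma A_diff: "A ys (x - y) = A ys x - A ys y" by (simp add: A_def st_diff right_diff_distrib phi_diff)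
lemma A_zero: "A ys 0 = 0" by (simp add: A_def)
lemma A_sum: "A ys (sum_list (map f xs)) = (\<Sum>x\<leftarrow>xs. A ys (f x))"
  by (rule additive_sum_list) (simp_all add: A_add A_zero)

lemma A_E_left: "A ys (E P * z) = (\<Sum>(c,as)\<leftarrow>P. cnj c * A ys (M as * z))"
  by (induct P) (auto simp: evalX_def M_def distrib_right A_add A_sc sc_multl A_zero)
lemma A_E_right: "A ys (z * E P) = (\<Sum>(c,bs)\<leftarrow>P. cnj c * A ys (z * M bs))"
  by (induct P) (auto simp: evalX_def M_def distrib_left A_add A_sc sc_multr A_zero)

lemma L0: "A ys (E P1 * Xh X h * E P2) = (\<Sum>(c1,as)\<leftarrow>P1. \<Sum>(c2,bs)\<leftarrow>P2. cnj c1 * cnj c2 * A ys (M as * Xh X h * M bs))"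
proof -
  have aux: "\<And>z. A ys (E P1 * Xh X h * z) = (\<Sum>(c1,as)\<leftarrow>P1. cnj c1 * A ys (M as * Xh X h * z))"
    by (simp only: mult.assoc A_E_left)
  have "A ys (E P1 * Xh X h * E P2) = (\<Sum>(c2,bs)\<leftarrow>P2. cnj c2 * (\<Sum>(c1,as)\<leftarrow>P1. cnj c1 * A ys (M as * Xh X h * M bs)))"
    by (simp only: A_E_right aux)
  also have "\<dots> = (\<Sum>(c2,bs)\<leftarrow>P2. \<Sum>(c1,as)\<leftarrow>P1. cnj c1 * cnj c2 * A ys (M as * Xh X h * M bs))"
    by (simp add: sum_list_const_mult[symmetric] case_prod_unfold mult_ac)
  finally show ?thesis by (simp add: case_prod_unfold sum_list_swap[of _ P2])
qed

definition Ka where "Ka ys as bs h = (\<Sum>(u,y,v)\<leftarrow>splits as. cnj (phi (M v) * ipH phi X y h) * A ys (M u * M bs))"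
definition Kb where "Kb ys as bs h = (\<Sum>(u,y,v)\<leftarrow>splits bs. cnj (phi (M u) * ipH phi X y h) * A ys (M as * M v))"

lemma L1_inner: "A ys (\<Sum>(u,y,v)\<leftarrow>splits as. sc (phi (M v)) (sc (ipH phi X y h) (sc c1 (M u)) * E P2)) =
       (\<Sum>(c2,bs)\<leftarrow>P2. cnj c1 * cnj c2 * Ka ys as bs h)"
proof -
  have "A ys (\<Sum>(u,y,v)\<leftarrow>splits as. sc (phi (M v)) (sc (ipH phi X y h) (sc c1 (M u)) * E P2))
    = (\<Sum>(u,y,v)\<leftarrow>splits as. \<Sum>(c2,bs)\<leftarrow>P2. cnj c1 * cnj c2 * (cnj (phi (M v) * ipH phi X y h) * A ys (M u * M bs)))"
    by (simp add: A_sum A_sc sc_multl A_E_right sum_list_const_mult[symmetric] case_prod_unfold mult_ac)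
  also have "\<dots> = (\<Sum>(c2,bs)\<leftarrow>P2. \<Sum>(u,y,v)\<leftarrow>splits as. cnj c1 * cnj c2 * (cnj (phi (M v) * ipH phi X y h) * A ys (M u * M bs)))"
    by (simp add: case_prod_unfold sum_list_swap[of _ "splits as"])
  also have "\<dots> = (\<Sum>(c2,bs)\<leftarrow>P2. cnj c1 * cnj c2 * Ka ys as bs h)"
    by (simp add: case_prod_unfold sum_list_const_mult[symmetric] Ka_def)
  finally show ?thesis .
qed

lemma L1: "A ys (corr1 P1 (E P2) h) = (\<Sum>(c1,as)\<leftarrow>P1. \<Sum>(c2,bs)\<leftarrow>P2. cnj c1 * cnj c2 * Ka ys as bs h)"
  unfolding corr1_def A_sum
  by (rule arg_cong[where f=sum_list], rule map_cong[OF refl]) (simp only: split_beta L1_inner)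


lemma L2_inner: "A ys (\<Sum>(u,y,v)\<leftarrow>splits bs. sc (phi (sc c2 (M u))) (sc (ipH phi X y h) (E P1) * M v)) =
       (\<Sum>(c1,as)\<leftarrow>P1. cnj c1 * cnj c2 * Kb ys as bs h)"
proof -
  have "A ys (\<Sum>(u,y,v)\<leftarrow>splits bs. sc (phi (sc c2 (M u))) (sc (ipH phi X y h) (E P1) * M v))
    = (\<Sum>(u,y,v)\<leftarrow>splits bs. \<Sum>(c1,as)\<leftarrow>P1. cnj c1 * cnj c2 * (cnj (phi (M u) * ipH phi X y h) * A ys (M as * M v)))"
    by (simp add: A_sum A_sc sc_multl phi_sc A_E_left sum_list_const_mult[symmetric] case_prod_unfold mult_ac)
  also have "\<dots> = (\<Sum>(c1,as)\<leftarrow>P1. \<Sum>(u,y,v)\<leftarrow>splits bs. cnj c1 * cnj c2 * (cnj (phi (M u) * ipH phi X y h) * A ys (M as * M v)))"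
    by (simp add: case_prod_unfold sum_list_swap[of _ "splits bs"])
  also have "\<dots> = (\<Sum>(c1,as)\<leftarrow>P1. cnj c1 * cnj c2 * Kb ys as bs h)"
    by (simp add: case_prod_unfold sum_list_const_mult[symmetric] Kb_def)
  finally show ?thesis .
qed

lemma L2: "A ys (corr2 (E P1) P2 h) = (\<Sum>(c1,as)\<leftarrow>P1. \<Sum>(c2,bs)\<leftarrow>P2. cnj c1 * cnj c2 * Kb ys as bs h)"
proof -
  have "A ys (corr2 (E P1) P2 h) = (\<Sum>(c2,bs)\<leftarrow>P2. \<Sum>(c1,as)\<leftarrow>P1. cnj c1 * cnj c2 * Kb ys as bs h)"
    unfolding corr2_def A_sum
    by (rule arg_cong[where f=sum_list], rule map_cong[OF refl]) (simp only: split_beta L2_inner)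
  then show ?thesis by (simp add: case_prod_unfold sum_list_swap[of _ P2])
qed

definition Ky where "Ky ys as bs h = (\<Sum>(u,y,v)\<leftarrow>splits ys. ipH phi X y h * (phi (M u * M (rev as)) * phi (M v * M (rev bs))))"

lemma phi_st_E: "\<forall>(c,as)\<in>set P. \<forall>g\<in>set as. step_in T g \<Longrightarrow>
   phi (M u * st (E P)) = (\<Sum>(c,as)\<leftarrow>P. cnj c * phi (M u * M (rev as)))"
proof -
  assume a: "\<forall>(c,as)\<in>set P. \<forall>g\<in>set as. step_in T g"
  have "phi (M u * st (E P)) = A u (E P * 1)" by (simp add: A_def)
  also have "\<dots> = (\<Sum>(c,as)\<leftarrow>P. cnj c * A u (M as))" by (subst A_E_left) simp
  also have "\<dots> = (\<Sum>(c,as)\<leftarrow>P. cnj c * phi (M u * M (rev as)))"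
    by (rule arg_cong[where f=sum_list], rule map_cong[OF refl]) (use a in \<open>auto simp: A_def st_M\<close>)
  finally show ?thesis .
qed

lemma L3:
  assumes "\<forall>(c,as)\<in>set P1. \<forall>g\<in>set as. step_in T g" "\<forall>(c,as)\<in>set P2. \<forall>g\<in>set as. step_in T g"
  shows "(\<Sum>(u,y,v)\<leftarrow>splits ys. ipH phi X y h * (phi (M u * st (E P1)) * phi (M v * st (E P2))))
     = (\<Sum>(c1,as)\<leftarrow>P1. \<Sum>(c2,bs)\<leftarrow>P2. cnj c1 * cnj c2 * Ky ys as bs h)"
proof -
  have "(\<Sum>(u,y,v)\<leftarrow>splits ys. ipH phi X y h * (phi (M u * st (E P1)) * phi (M v * st (E P2))))
     = (\<Sum>(u,y,v)\<leftarrow>splits ys. \<Sum>(c1,as)\<leftarrow>P1. \<Sum>(c2,bs)\<leftarrow>P2. cnj c1 * cnj c2 * (ipH phi X y h * (phi (M u * M (rev as)) * phi (M v * M (rev bs)))))"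
    by (simp add: phi_st_E[OF assms(1)] phi_st_E[OF assms(2)] sum_list_const_mult[symmetric] sum_list_mult_const[symmetric]
        case_prod_unfold mult_ac sum_list_swap[of _ P2])
  also have "\<dots> = (\<Sum>(c1,as)\<leftarrow>P1. \<Sum>(c2,bs)\<leftarrow>P2. \<Sum>(u,y,v)\<leftarrow>splits ys. cnj c1 * cnj c2 * (ipH phi X y h * (phi (M u * M (rev as)) * phi (M v * M (rev bs)))))"
    by (simp add: case_prod_unfold sum_list_swap[of _ "splits ys"])
  also have "\<dots> = (\<Sum>(c1,as)\<leftarrow>P1. \<Sum>(c2,bs)\<leftarrow>P2. cnj c1 * cnj c2 * Ky ys as bs h)"
    by (simp add: case_prod_unfold sum_list_const_mult[symmetric] Ky_def)
  finally show ?thesis .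
qed


lemma core_A:
  assumes "step_in T h" "\<forall>g\<in>set (ys @ as @ bs). step_in T g"
  shows "A ys (M as * Xh X h * M bs) - Ka ys as bs h - Kb ys as bs h = Ky ys as bs h"
  using core[OF assms] by (simp add: A_def Ka_def Kb_def Ky_def)

lemma star:
  assumes h: "step_in T h" and ys: "\<forall>g\<in>set ys. step_in T g"
    and p1: "\<forall>(c,as)\<in>set P1. \<forall>g\<in>set as. step_in T g" and p2: "\<forall>(c,as)\<in>set P2. \<forall>g\<in>set as. step_in T g"
  shows "A ys (E P1 * Xh X h * E P2 - corr1 P1 (E P2) h - corr2 (E P1) P2 h) =
     (\<Sum>(u,y,v)\<leftarrow>splits ys. ipH phi X y h * (phi (M u * st (E P1)) * phi (M v * st (E P2))))"
proof -
  have "A ys (E P1 * Xh X h * E P2 - corr1 P1 (E P2) h - corr2 (E P1) P2 h) =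
    (\<Sum>(c1,as)\<leftarrow>P1. \<Sum>(c2,bs)\<leftarrow>P2. cnj c1 * cnj c2 * (A ys (M as * Xh X h * M bs) - Ka ys as bs h - Kb ys as bs h))"
    by (simp add: A_diff L0 L1 L2 right_diff_distrib case_prod_unfold sum_list_subtractf)
  also have "\<dots> = (\<Sum>(c1,as)\<leftarrow>P1. \<Sum>(c2,bs)\<leftarrow>P2. cnj c1 * cnj c2 * Ky ys as bs h)"
  proof (rule arg_cong[where f=sum_list], rule map_cong[OF refl], clarify)
    fix c1 as assume a: "(c1,as) \<in> set P1"
    show "(\<Sum>(c2,bs)\<leftarrow>P2. cnj c1 * cnj c2 * (A ys (M as * Xh X h * M bs) - Ka ys as bs h - Kb ys as bs h)) =
          (\<Sum>(c2,bs)\<leftarrow>P2. cnj c1 * cnj c2 * Ky ys as bs h)"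
    proof (rule arg_cong[where f=sum_list], rule map_cong[OF refl], clarify)
      fix c2 bs assume b: "(c2,bs) \<in> set P2"
      have "\<forall>g\<in>set (ys @ as @ bs). step_in T g" using ys p1 p2 a b by fastforce
      then show "cnj c1 * cnj c2 * (A ys (M as * Xh X h * M bs) - Ka ys as bs h - Kb ys as bs h) =
          cnj c1 * cnj c2 * Ky ys as bs h" using core_A[OF h] by simp
    qed
  qed
  also have "\<dots> = (\<Sum>(u,y,v)\<leftarrow>splits ys. ipH phi X y h * (phi (M u * st (E P1)) * phi (M v * st (E P2))))"
    by (rule L3[OF p1 p2, symmetric])
  finally show ?thesis .
qed


lemma phi_E_st: "phi (E P * st x) = (\<Sum>(c,ys)\<leftarrow>P. c * A ys x)"
  by (induct P) (auto simp: evalX_def M_def distrib_right phi_add sc_multl phi_sc A_def)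

lemma final_ncs:
  assumes Y: "polyX_in T Y" and U: "EX2_in T U"
  shows "phi (E Y * st (deltaX sc phi X U)) =
         phi2 phi (pairH_semi sc phi X (DX sc X Y) (E2_star st (EX2_val sc X U)))"
proof -
  have dX: "deltaX sc phi X U = (\<Sum>(P1,P2,h)\<leftarrow>U. E P1 * Xh X h * E P2 - corr1 P1 (E P2) h - corr2 (E P1) P2 h)"
    by (simp add: deltaX_def delta_term)
  have "phi (E Y * st (deltaX sc phi X U)) = (\<Sum>(c,ys)\<leftarrow>Y. c * (\<Sum>(P1,P2,h)\<leftarrow>U. \<Sum>(u,y,v)\<leftarrow>splits ys.
          ipH phi X y h * (phi (M u * st (E P1)) * phi (M v * st (E P2)))))"
    unfolding phi_E_st dX
  proof (rule arg_cong[where f=sum_list], rule map_cong[OF refl], clarify)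
    fix c ys assume cy: "(c, ys) \<in> set Y"
    have ys: "\<forall>g\<in>set ys. step_in T g" using Y cy unfolding polyX_in_def by fastforce
    show "c * A ys (\<Sum>(P1,P2,h)\<leftarrow>U. E P1 * Xh X h * E P2 - corr1 P1 (E P2) h - corr2 (E P1) P2 h) =
          c * (\<Sum>(P1,P2,h)\<leftarrow>U. \<Sum>(u,y,v)\<leftarrow>splits ys.
          ipH phi X y h * (phi (M u * st (E P1)) * phi (M v * st (E P2))))"
      unfolding A_sum
    proof (rule arg_cong[where f="\<lambda>z. c * z"], rule arg_cong[where f=sum_list], rule map_cong[OF refl], clarify)
      fix P1 P2 h assume u: "(P1, P2, h) \<in> set U"
      then have "polyX_in T P1" "polyX_in T P2" "step_in T h" using U unfolding EX2_in_def by fastforce+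
      then show "A ys (E P1 * Xh X h * E P2 - corr1 P1 (E P2) h - corr2 (E P1) P2 h) =
          (\<Sum>(u,y,v)\<leftarrow>splits ys. ipH phi X y h * (phi (M u * st (E P1)) * phi (M v * st (E P2))))"
        using star[OF _ ys] unfolding polyX_in_def by blast
    qed
  qed
  also have "\<dots> = phi2 phi (pairH_semi sc phi X (DX sc X Y) (E2_star st (EX2_val sc X U)))"
    by (simp add: phi2_def pairH_semi_def DX_splits E2_star_def EX2_val_def tens2_scale_def tens2_mult_def tens2_star_def
     sum_list_map_concat sum_list_concat' map_concat case_prod_unfold o_def sc_multl phi_sc
     sum_list_const_mult[symmetric] mult_ac sum_list_swap[of _ U])
  finally show ?thesis .
qed

end

theorem mainTheorem2:
  fixes sc :: "complex \<Rightarrow> 'a::{real_normed_algebra_1,banach} \<Rightarrow> 'a"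
    and st :: "'a \<Rightarrow> 'a" and phi :: "'a \<Rightarrow> complex"
    and T :: real and X :: "real \<Rightarrow> 'a"
    and Y :: polyX and U :: EX2
  assumes "nc_prob_space sc st phi"
    and "T > 0"
    and "semicircular_process st phi T X"
    and "polyX_in T Y"
    and "EX2_in T U"
  shows "phi (evalX sc X Y * st (deltaX sc phi X U)) =
         phi2 phi (pairH_semi sc phi X (DX sc X Y) (E2_star st (EX2_val sc X U)))"
  proof -
  interpret ncs sc st phi T X using assms(1,3) by (simp add: ncs_def ncp_def ncs_axioms_def)
  show ?thesis using final_ncs[OF assms(4,5)] .
qed

end
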